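(* There exists an $F_\sigma$ set $E\subseteq\mathbb{R}$ having strong uniform density type (SUDT) such that for every $G_\delta$ set $\widetilde{E}\subseteq\mathbb{R}$ with $|E\,\triangle\,\widetilde{E}|=0$, the set $\widetilde{E}$ does not have uniform density type (UDT).
   Context: $|A|$ denotes Lebesgue measure. For a measurable $E\subseteq\mathbb{R}$ and $\gamma,\delta>0$ let $E^{\gamma,\delta}=\{x\in\mathbb{R} : \forall r\in(0,\delta],\ \max\{|(x-r,x)\cap E|/r,\ |(x,x+r)\cap E|/r\}\ge\gamma\}$. A measurable set $E$ has uniform density type (UDT) if there exist sequences $\gamma_n\nearrow 1$ and $\delta_n\searrow 0$ (positive) such that $E\subseteq\bigcap_{k=1}^\infty\bigcup_{n=k}^\infty E^{\gamma_n,\delta_n}$. It has strong uniform density type (SUDT) if there exist sequences $\gamma_n\nearrow 1$ and $\delta_n\searrow 0$ such that $E\subseteq\bigcup_{k=1}^\infty\bigcap_{n=k}^\infty E^{\gamma_n,\delta_n}$. *)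

theory Defs
  imports "HOL-Analysis.Analysis"
begin

definition dens_set :: "real set \<Rightarrow> real \<Rightarrow> real \<Rightarrow> real set" where
  "dens_set E \<gamma> \<delta> = {x. \<forall>r\<in>{0<..\<delta>}.
      max (measure lebesgue ({x - r<..<x} \<inter> E) / r) (measure lebesgue ({x<..<x + r} \<inter> E) / r) \<ge> \<gamma>}"

definition admissible_seqs :: "(nat \<Rightarrow> real) \<Rightarrow> (nat \<Rightarrow> real) \<Rightarrow> bool" where
  "admissible_seqs \<gamma> \<delta> \<longleftrightarrow>
     (\<forall>n. \<gamma> n > 0) \<and> incseq \<gamma> \<and> \<gamma> \<longlonglongrightarrow> 1 \<and>
     (\<forall>n. \<delta> n > 0) \<and> decseq \<delta> \<and> \<delta> \<longlonglongrightarrow> 0"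

definition UDT :: "real set \<Rightarrow> bool" where
  "UDT E \<longleftrightarrow> E \<in> sets lebesgue \<and> (\<exists>\<gamma> \<delta>. admissible_seqs \<gamma> \<delta> \<and>
      E \<subseteq> (\<Inter>k. \<Union>n\<in>{k..}. dens_set E (\<gamma> n) (\<delta> n)))"

definition SUDT :: "real set \<Rightarrow> bool" where
  "SUDT E \<longleftrightarrow> E \<in> sets lebesgue \<and> (\<exists>\<gamma> \<delta>. admissible_seqs \<gamma> \<delta> \<and>
      E \<subseteq> (\<Union>k. \<Inter>n\<in>{k..}. dens_set E (\<gamma> n) (\<delta> n)))"

end

theory Submission
  imports Defs
begin

lemma count_measure:
  fixes S :: "int \<Rightarrow> real set"
  assumes p: "p > 0" and w: "w \<ge> 0" and ab: "a \<le> b"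
    and sub: "\<And>k. S k \<subseteq> {t + of_int k * p - w .. t + of_int k * p + w}"
    and meas: "\<And>k. S k \<in> sets lebesgue"
  shows "measure lebesgue ({a<..<b} \<inter> (\<Union>k. S k)) \<le> ((b - a + 2*w)/p + 1) * (2*w)"
proof -
  define lo where "lo = (a - w - t)/p"
  define hi where "hi = (b + w - t)/p"
  define F where "F = {\<lceil>lo\<rceil>..\<lfloor>hi\<rfloor>}"
  have finF: "finite F" by (simp add: F_def)
  have sub1: "{a<..<b} \<inter> (\<Union>k. S k) \<subseteq> (\<Union>k\<in>F. S k)"
  proof
    fix y assume "y \<in> {a<..<b} \<inter> (\<Union>k. S k)"
    then obtain k where y: "a < y" "y < b" "y \<in> S k" by auto
    then have "t + of_int k * p - w \<le> y" "y \<le> t + of_int k * p + w" using sub[of k] by auto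
    then have "a - w - t < of_int k * p" "of_int k * p < b + w - t" using y by auto
    then have "lo < of_int k" "of_int k < hi" using p by (auto simp: lo_def hi_def field_simps)
    then have "k \<in> F" unfolding F_def by (simp add: ceiling_le_iff le_floor_iff less_imp_le)
    then show "y \<in> (\<Union>k\<in>F. S k)" using y by auto
  qed
  have Sfm: "S k \<in> lmeasurable" for k
    by (rule fmeasurableI2[OF lmeasurable_interval(1) sub meas])
  have mS: "measure lebesgue (S k) \<le> 2*w" for k
  proof -
    have "measure lebesgue (S k) \<le> measure lebesgue {t + of_int k * p - w .. t + of_int k * p + w}"
      by (rule measure_mono_fmeasurable[OF sub meas lmeasurable_interval(1)])
    also have "\<dots> = 2*w" using w by simp
    finally show ?thesis .
  qed
  have "measure lebesgue ({a<..<b} \<inter> (\<Union>k. S k)) \<le> measure lebesgue (\<Union>k\<in>F. S k)"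
    apply (rule measure_mono_fmeasurable[OF sub1])
    using meas apply (intro sets.Int sets.countable_UN; auto)
    using finF Sfm by (intro fmeasurable.finite_UN) auto
  also have "\<dots> \<le> (\<Sum>k\<in>F. measure lebesgue (S k))"
    by (rule measure_UNION_le[OF finF meas])
  also have "\<dots> \<le> (\<Sum>k\<in>F. 2*w)" by (rule sum_mono[OF mS])
  also have "\<dots> = real (card F) * (2*w)" by simp
  also have "\<dots> \<le> ((b - a + 2*w)/p + 1) * (2*w)"
  proof (rule mult_right_mono)
    show "0 \<le> 2*w" using w by simp
    have "real (card F) \<le> hi - lo + 1"
    proof (cases "\<lceil>lo\<rceil> \<le> \<lfloor>hi\<rfloor>")
      case True
      then have "real (card F) = of_int (\<lfloor>hi\<rfloor> - \<lceil>lo\<rceil> + 1)" by (simp add: F_def)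
      also have "\<dots> \<le> hi - lo + 1" using of_int_floor_le[of hi] le_of_int_ceiling[of lo] by (simp; linarith)
      finally show ?thesis .
    next
      case False
      then have "F = {}" by (simp add: F_def)
      moreover have "lo \<le> hi" using ab w p by (simp add: lo_def hi_def divide_right_mono)
      ultimately show ?thesis by simp
    qed
    also have "hi - lo + 1 = (b - a + 2*w)/p + 1" using p by (simp add: lo_def hi_def field_simps)
    finally show "real (card F) \<le> (b - a + 2*w)/p + 1" .
  qed
  finally show ?thesis .
qed

definition aa :: "nat \<Rightarrow> nat" where "aa j = j*j + 3*j"
definition hh :: "nat \<Rightarrow> real" where "hh j = (1/2)^(aa j)"
definition rh :: "nat \<Rightarrow> real" where "rh j = (1/2)^((j+2)^2)"
definition gapj :: "real \<Rightarrow> real \<Rightarrow> nat \<Rightarrow> real set" where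
  "gapj t s j = (\<Union>k::int. {t + of_int k * (s*hh j) - s*rh j <..< t + of_int k * (s*hh j) + s*rh j})"
definition Kset :: "real \<Rightarrow> real \<Rightarrow> real set" where
  "Kset t s = {x. \<forall>j. \<forall>k::int. s * rh j \<le> \<bar>x - (t + of_int k * (s*hh j))\<bar>}"

lemma hh_pos: "hh j > 0" by (simp add: hh_def)
lemma rh_pos: "rh j > 0" by (simp add: rh_def)
lemma rh_hh: "rh j = hh j * (1/2)^(j+4)"
proof -
  have "(j+2)^2 = aa j + (j+4)" by (simp add: aa_def power2_eq_square algebra_simps)
  then show ?thesis by (simp add: rh_def hh_def power_add)
qed
lemma half_pow_le16: "(1/2::real)^(j+4) \<le> 1/16"
proof -
  have "(1/2::real)^j \<le> 1" by (simp add: power_le_one)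
  then show ?thesis by (simp add: power_add power_one_over)
qed

lemma rh_le_hh: "rh j \<le> hh j / 16"
proof -
  have "hh j * (1/2::real)^(j+4) \<le> hh j * (1/16)"
    by (rule mult_left_mono[OF half_pow_le16]) (use hh_pos[of j] in auto)
  then show ?thesis by (simp add: rh_hh)
qed

lemma rh_decay: assumes "J0 \<le> j" shows "rh j \<le> rh J0 * (1/2)^(j - J0)"
proof -
  have "(J0+2)^2 + (j - J0) \<le> (j+2)^2"
  proof -
    obtain d where d: "j = J0 + d" using assms le_Suc_ex by blast
    show ?thesis by (simp add: d power2_eq_square algebra_simps)
  qed
  then have "(1/2::real)^((j+2)^2) \<le> (1/2)^((J0+2)^2 + (j - J0))" by (rule power_decreasing) auto
  then show ?thesis by (simp add: rh_def power_add)
qed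

lemma geo_sum_bound:
  assumes "finite I" "I \<subseteq> {J0..}"
  shows "(\<Sum>j\<in>I. (1/2::real)^(j - J0)) \<le> 2"
proof -
  have inj: "inj_on (\<lambda>j. j - J0) I"
  proof (rule inj_onI)
    fix x y assume "x \<in> I" "y \<in> I" "x - J0 = y - J0"
    moreover have "J0 \<le> x" "J0 \<le> y" using assms(2) calculation by auto
    ultimately show "x = y" by arith
  qed
  have "(\<Sum>j\<in>I. (1/2::real)^(j - J0)) = (\<Sum>i\<in>(\<lambda>j. j - J0) ` I. (1/2)^i)"
    by (simp add: sum.reindex[OF inj])
  also have "\<dots> \<le> (\<Sum>i. (1/2::real)^i)"
    by (rule sum_le_suminf) (auto intro: summable_geometric assms)
  also have "\<dots> = 2" by (simp add: suminf_geometric)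
  finally show ?thesis .
qed

lemma gapj_open: "open (gapj t s j)" by (auto simp: gapj_def)

lemma gap_level_measure:
  assumes s: "s > 0" and ab: "a \<le> b"
  shows "measure lebesgue ({a<..<b} \<inter> gapj t s j) \<le> (b - a) * (1/2)^(j+3) + 3 * s * rh j"
proof -
  have "measure lebesgue ({a<..<b} \<inter> gapj t s j)
     \<le> ((b - a + 2*(s*rh j))/(s*hh j) + 1) * (2*(s*rh j))"
    unfolding gapj_def
    by (rule count_measure[where t=t]) (use s hh_pos[of j] rh_pos[of j] ab in auto)
  also have "\<dots> = (b - a) * (2 * (rh j / hh j)) + 4 * s * rh j * (rh j / hh j) + 2 * s * rh j"
    using s hh_pos[of j] by (simp add: field_simps)
  also have "\<dots> \<le> (b - a) * (1/2)^(j+3) + 3 * s * rh j"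
  proof -
    have q: "rh j / hh j = (1/2)^(j+4)" using hh_pos[of j] by (simp add: rh_hh)
    have q2: "(1/2::real)^(j+4) \<le> 1/16" by (rule half_pow_le16)
    have "4 * s * rh j * (rh j / hh j) \<le> 4 * s * rh j * (1/16)"
      using q q2 s rh_pos[of j] by (intro mult_left_mono) auto
    moreover have "2 * (1/2::real)^(j+4) = (1/2)^(j+3)" by (simp add: power_add power_one_over)
    ultimately have "(b - a) * (2 * (rh j / hh j)) = (b - a) * (1/2)^(j+3)" using q by simp
    moreover have "4 * s * rh j * (rh j / hh j) \<le> s * rh j / 4"
      using \<open>4 * s * rh j * (rh j / hh j) \<le> 4 * s * rh j * (1/16)\<close> by simp
    moreover have "0 \<le> s * rh j" using s rh_pos[of j] by simp
    ultimately show ?thesis by linarith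
  qed
  finally show ?thesis .
qed

lemma gap_measure:
  assumes s: "s > 0" and ab: "a \<le> b"
  shows "measure lebesgue ({a<..<b} \<inter> (\<Union>j\<in>{J0..}. gapj t s j)) \<le> (b - a) * (1/2)^(J0+2) + 6 * s * rh J0"
proof -
  have eq: "{a<..<b} \<inter> (\<Union>j\<in>{J0..}. gapj t s j) = (\<Union>j\<in>{J0..}. {a<..<b} \<inter> gapj t s j)" by auto
  have fm: "{a<..<b} \<inter> gapj t s j \<in> lmeasurable" for j
    by (rule fmeasurableI2[OF lmeasurable_interval(2)]) (auto simp: gapj_open)
  show ?thesis unfolding eq
  proof (rule measure_UN_bound)
    show "countable {J0..}" by simp
    show "\<And>j. j \<in> {J0..} \<Longrightarrow> {a<..<b} \<inter> gapj t s j \<in> lmeasurable" using fm by auto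
    fix I' assume I': "I' \<subseteq> {J0..}" "finite I'"
    have "measure lebesgue (\<Union>j\<in>I'. {a<..<b} \<inter> gapj t s j) \<le> (\<Sum>j\<in>I'. measure lebesgue ({a<..<b} \<inter> gapj t s j))"
      using fm by (intro measure_UNION_le I') (auto)
    also have "\<dots> \<le> (\<Sum>j\<in>I'. ((b - a) * (1/2)^(J0+3) + 3 * s * rh J0) * (1/2)^(j - J0))"
    proof (rule sum_mono)
      fix j assume "j \<in> I'"
      then have jJ: "J0 \<le> j" using I' by auto
      have "j + 3 = (J0+3) + (j - J0)" using jJ by simp
      then have P: "(1/2::real)^(j+3) = (1/2)^(J0+3) * (1/2)^(j - J0)"
        by (metis power_add)
      have R: "3 * s * rh j \<le> 3 * s * rh J0 * (1/2)^(j-J0)"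
        using rh_decay[OF jJ] s by simp
      have m: "measure lebesgue ({a<..<b} \<inter> gapj t s j) \<le> (b - a) * ((1/2)^(J0+3) * (1/2)^(j - J0)) + 3 * s * rh j"
        using gap_level_measure[OF s ab, of t j] unfolding P .
      have e: "((b - a) * (1/2)^(J0+3) + 3 * s * rh J0) * (1/2::real)^(j - J0)
          = (b - a) * ((1/2)^(J0+3) * (1/2)^(j - J0)) + 3 * s * rh J0 * (1/2)^(j-J0)"
        by (simp add: algebra_simps)
      show "measure lebesgue ({a<..<b} \<inter> gapj t s j) \<le> ((b - a) * (1/2)^(J0+3) + 3 * s * rh J0) * (1/2)^(j - J0)"
        unfolding e using m R by linarith
    qed
    also have "\<dots> = ((b - a) * (1/2)^(J0+3) + 3 * s * rh J0) * (\<Sum>j\<in>I'. (1/2)^(j - J0))"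
      by (simp add: sum_distrib_left)
    also have "\<dots> \<le> ((b - a) * (1/2)^(J0+3) + 3 * s * rh J0) * 2"
      using geo_sum_bound[OF I'(2) I'(1)] ab s rh_pos[of J0] by (intro mult_left_mono) auto
    also have "\<dots> = (b - a) * (1/2)^(J0+2) + 6 * s * rh J0" by (simp add: power_add power_one_over field_simps)
    finally show "measure lebesgue (\<Union>j\<in>I'. {a<..<b} \<inter> gapj t s j) \<le> (b - a) * (1/2)^(J0+2) + 6 * s * rh J0" .
  qed
qed

lemma Kset_eq: "Kset t s = - (\<Union>j. gapj t s j)"
proof (rule set_eqI)
  fix x
  show "x \<in> Kset t s \<longleftrightarrow> x \<in> - (\<Union>j. gapj t s j)"
  proof
    assume "x \<in> Kset t s"
    then have h: "s * rh j \<le> \<bar>x - (t + of_int k * (s*hh j))\<bar>" for j k by (auto simp: Kset_def)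
    show "x \<in> - (\<Union>j. gapj t s j)"
    proof
      assume "x \<in> (\<Union>j. gapj t s j)"
      then obtain j k where "t + of_int k * (s*hh j) - s*rh j < x" "x < t + of_int k * (s*hh j) + s*rh j"
        by (auto simp: gapj_def)
      then have "\<bar>x - (t + of_int k * (s*hh j))\<bar> < s * rh j" unfolding abs_less_iff by linarith
      then show False using h[of j k] by linarith
    qed
  next
    assume a: "x \<in> - (\<Union>j. gapj t s j)"
    show "x \<in> Kset t s" unfolding Kset_def
    proof (intro CollectI allI)
      fix j and k :: int
      show "s * rh j \<le> \<bar>x - (t + of_int k * (s*hh j))\<bar>"
      proof (rule ccontr)
        assume "\<not> ?thesis"
        then have "\<bar>x - (t + of_int k * (s*hh j))\<bar> < s * rh j" by linarith
        then have "t + of_int k * (s*hh j) - s*rh j < x \<and> x < t + of_int k * (s*hh j) + s*rh j"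
          unfolding abs_less_iff by linarith
        then have "x \<in> gapj t s j" unfolding gapj_def by (intro UN_I[of k]) auto
        then show False using a by auto
      qed
    qed
  qed
qed

lemma Kset_closed: "closed (Kset t s)"
  unfolding Kset_eq by (intro closed_Compl open_UN) (auto simp: gapj_open)

lemma Kset_sets: "Kset t s \<in> sets lebesgue"
  using Kset_closed by simp

lemma aa_mono: "j \<le> m \<Longrightarrow> aa j \<le> aa m"
  unfolding aa_def by (intro add_mono mult_le_mono) auto

lemma pow_half_mult: "a \<le> A \<Longrightarrow> (1/2::real)^a * 2^A = 2^(A - a)"
proof -
  assume "a \<le> A"
  then have "(2::real)^A = 2^a * 2^(A - a)" by (simp add: power_add[symmetric])
  then show ?thesis by (simp add: power_one_over)
qed

lemma hh_int: "j \<le> m \<Longrightarrow> hh j * 2^(aa m) \<in> \<int>"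
  using pow_half_mult[OF aa_mono, of j m] unfolding hh_def
  by (metis Ints_numeral Ints_power)

lemma rh_int: "j < m \<Longrightarrow> rh j * 2^(aa m) \<in> \<int>"
proof -
  assume "j < m"
  then have "aa (Suc j) \<le> aa m" by (intro aa_mono) auto
  moreover have "(j+2)^2 \<le> aa (Suc j)" by (simp add: aa_def power2_eq_square)
  ultimately have "(j+2)^2 \<le> aa m" by simp
  then show ?thesis using pow_half_mult[of "(j+2)^2" "aa m"] unfolding rh_def
    by (metis Ints_numeral Ints_power)
qed

lemma rh_m: "rh m * 2^(aa m) = (1/2)^(m+4)"
proof -
  have "rh m * 2^(aa m) = hh m * 2^(aa m) * (1/2)^(m+4)" by (simp add: rh_hh)
  also have "hh m * 2^(aa m) = 1" by (simp add: hh_def power_one_over)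
  finally show ?thesis by simp
qed

lemma hh_mono: "j \<le> m \<Longrightarrow> hh m \<le> hh j"
  unfolding hh_def by (intro power_decreasing aa_mono) auto

lemma int_frac_contra:
  assumes "Z \<in> \<int>" "0 < f" "f \<le> 1/8" "0 \<le> Z - f" "Z - f < (1/2::real)"
  shows False
proof -
  obtain z where z: "Z = of_int z" using assms(1) Ints_cases by blast
  then have "0 < z" using assms by simp
  then have "(1::real) \<le> of_int z" by simp
  then show False using assms z by linarith
qed

lemma lattice_sep:
  fixes k1 k2 :: int
  assumes m: "m = max j1 j2"
    and U0: "0 \<le> U" and U1: "U < hh m / 2"
    and U: "U = of_int k2 * hh j2 - rh j2 - of_int k1 * hh j1 - rh j1"
  shows False
proof -
  define P :: real where "P = 2^(aa m)"
  have hP: "hh m * P = 1" by (simp add: P_def hh_def power_one_over)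
  have Pp: "P > 0" by (simp add: P_def)
  have UP: "U * P = of_int k2 * (hh j2 * P) - rh j2 * P - of_int k1 * (hh j1 * P) - rh j1 * P"
    by (simp add: U algebra_simps)
  have h1: "hh j1 * P \<in> \<int>" "hh j2 * P \<in> \<int>" using hh_int m by (auto simp: P_def)
  have UP0: "0 \<le> U * P" using U0 Pp by simp
  have UP1: "U * P < 1/2"
  proof -
    have "U * P < hh m / 2 * P" using U1 Pp by simp
    then show ?thesis using hP by simp
  qed
  have q: "(1/2::real)^(m+4) \<le> 1/16" by (rule half_pow_le16)
  have qp: "(0::real) < (1/2)^(m+4)" by simp
  consider "j1 = m" "j2 = m" | "j1 < m" "j2 = m" | "j2 < m" "j1 = m" using m by linarith
  then show False
  proof cases
    case 1
    have "U * P = (of_int k2 * (hh j2 * P) - of_int k1 * (hh j1 * P)) - 2 * (1/2)^(m+4)"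
      using UP rh_m[of m] 1 unfolding P_def by simp
    moreover have "of_int k2 * (hh j2 * P) - of_int k1 * (hh j1 * P) \<in> \<int>" using h1 by auto
    moreover note UP0 UP1
    ultimately show False using q qp by (intro int_frac_contra[of "of_int k2 * (hh j2 * P) - of_int k1 * (hh j1 * P)" "2 * (1/2)^(m+4)"]) auto
  next
    case 2
    have "U * P = (of_int k2 * (hh j2 * P) - of_int k1 * (hh j1 * P) - rh j1 * P) - (1/2)^(m+4)"
      using UP rh_m[of m] 2 unfolding P_def by simp
    moreover have "of_int k2 * (hh j2 * P) - of_int k1 * (hh j1 * P) - rh j1 * P \<in> \<int>"
      using h1 rh_int[OF 2(1)] by (auto simp: P_def)
    moreover note UP0 UP1
    ultimately show False using q qp by (intro int_frac_contra[of "of_int k2 * (hh j2 * P) - of_int k1 * (hh j1 * P) - rh j1 * P" "(1/2)^(m+4)"]) auto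
  next
    case 3
    have "U * P = (of_int k2 * (hh j2 * P) - of_int k1 * (hh j1 * P) - rh j2 * P) - (1/2)^(m+4)"
      using UP rh_m[of m] 3 unfolding P_def by simp
    moreover have "of_int k2 * (hh j2 * P) - of_int k1 * (hh j1 * P) - rh j2 * P \<in> \<int>"
      using h1 rh_int[OF 3(1)] by (auto simp: P_def)
    moreover note UP0 UP1
    ultimately show False using q qp by (intro int_frac_contra[of "of_int k2 * (hh j2 * P) - of_int k1 * (hh j1 * P) - rh j2 * P" "(1/2)^(m+4)"]) auto
  qed
qed

lemma two_sides:
  assumes s: "s > 0" and x: "x \<in> Kset t s" and r: "r > 0" "4*r \<le> s * hh J"
  shows "{x - r<..<x} \<inter> (\<Union>j\<in>{..J}. gapj t s j) = {} \<or> {x<..<x+r} \<inter> (\<Union>j\<in>{..J}. gapj t s j) = {}"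
proof (rule ccontr)
  assume "\<not> ?thesis"
  then obtain y1 j1 y2 j2 where y1: "y1 \<in> {x - r<..<x}" "y1 \<in> gapj t s j1" "j1 \<le> J"
    and y2: "y2 \<in> {x<..<x+r}" "y2 \<in> gapj t s j2" "j2 \<le> J" by blast
  from y1(2) obtain k1 :: int where k1: "t + of_int k1 * (s*hh j1) - s*rh j1 < y1" "y1 < t + of_int k1 * (s*hh j1) + s*rh j1"
    unfolding gapj_def by auto
  from y2(2) obtain k2 :: int where k2: "t + of_int k2 * (s*hh j2) - s*rh j2 < y2" "y2 < t + of_int k2 * (s*hh j2) + s*rh j2"
    unfolding gapj_def by auto
  define c1 where "c1 = t + of_int k1 * (s*hh j1)"
  define c2 where "c2 = t + of_int k2 * (s*hh j2)"
  define w1 where "w1 = s * rh j1"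
  define w2 where "w2 = s * rh j2"
  have xk1: "w1 \<le> \<bar>x - c1\<bar>" using x unfolding Kset_def c1_def w1_def by blast
  have xk2: "w2 \<le> \<bar>x - c2\<bar>" using x unfolding Kset_def c2_def w2_def by blast
  have A1: "c1 + w1 \<le> x" using xk1 k1 y1(1) unfolding c1_def[symmetric] w1_def[symmetric] by (auto simp: abs_if split: if_splits)
  have A2: "x - r < c1 + w1" using k1 y1(1) unfolding c1_def[symmetric] w1_def[symmetric] by auto
  have B1: "x \<le> c2 - w2" using xk2 k2 y2(1) unfolding c2_def[symmetric] w2_def[symmetric] by (auto simp: abs_if split: if_splits)
  have B2: "c2 - w2 < x + r" using k2 y2(1) unfolding c2_def[symmetric] w2_def[symmetric] by auto
  define U where "U = of_int k2 * hh j2 - rh j2 - of_int k1 * hh j1 - rh j1"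
  have DU: "(c2 - w2) - (c1 + w1) = s * U" by (simp add: U_def c1_def c2_def w1_def w2_def algebra_simps)
  have "0 \<le> s * U" using DU A1 B1 by linarith
  then have U0: "0 \<le> U" using s by (auto simp: zero_le_mult_iff)
  have "s * U < 2 * r" using DU A2 B2 by linarith
  then have "s * U < s * (hh J / 2)" using r(2) by linarith
  then have "U < hh J / 2" using s by simp
  moreover have "hh J \<le> hh (max j1 j2)" using y1(3) y2(3) by (intro hh_mono) auto
  ultimately have U1: "U < hh (max j1 j2) / 2" by linarith
  show False by (rule lattice_sep[OF refl U0 U1 U_def])
qed

lemma gap_sub_side:
  assumes s: "s > 0" and ab: "b - a = r" "r > 0"
    and empty: "{a<..<b} \<inter> (\<Union>j\<in>{..J}. gapj t s j) = {}"
    and J1: "s * hh (Suc J) < 4 * r" and nJ: "n \<le> J"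
  shows "measure lebesgue ({a<..<b} - Kset t s) \<le> (1/2)^n * r"
proof -
  have sub: "{a<..<b} - Kset t s \<subseteq> {a<..<b} \<inter> (\<Union>j\<in>{Suc J..}. gapj t s j)"
  proof
    fix y assume y: "y \<in> {a<..<b} - Kset t s"
    then obtain j where j: "y \<in> gapj t s j" unfolding Kset_eq by auto
    have "\<not> j \<le> J" using j y empty by blast
    then show "y \<in> {a<..<b} \<inter> (\<Union>j\<in>{Suc J..}. gapj t s j)" using j y by auto
  qed
  have fm: "{a<..<b} \<inter> (\<Union>j\<in>{Suc J..}. gapj t s j) \<in> lmeasurable"
    by (rule fmeasurableI2[OF lmeasurable_interval(2)]) (auto simp: gapj_open)
  have "measure lebesgue ({a<..<b} - Kset t s) \<le> measure lebesgue ({a<..<b} \<inter> (\<Union>j\<in>{Suc J..}. gapj t s j))"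
    by (rule measure_mono_fmeasurable[OF sub _ fm]) (auto simp: Kset_sets)
  also have "\<dots> \<le> (b - a) * (1/2)^(Suc J+2) + 6 * s * rh (Suc J)"
    by (rule gap_measure) (use s ab in auto)
  also have "\<dots> \<le> (1/2)^n * r"
  proof -
    have e1: "(b - a) * (1/2::real)^(Suc J+2) = r * (1/2)^J / 8" using ab by (simp add: power_add power_one_over)
    have "6 * s * rh (Suc J) = 6 * (s * hh (Suc J)) * (1/2)^(J+5)" by (simp add: rh_hh ac_simps)
    also have "\<dots> \<le> 6 * (4 * r) * (1/2)^(J+5)" using J1 by (intro mult_right_mono mult_left_mono) auto
    also have "\<dots> = r * (1/2)^J * (3/4)" by (simp add: power_add power_one_over)
    finally have e2: "6 * s * rh (Suc J) \<le> r * (1/2)^J * (3/4)" .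
    have "(1/2::real)^J \<le> (1/2)^n" using nJ by (intro power_decreasing) auto
    then have "r * (1/2::real)^J \<le> r * (1/2)^n" using ab by (intro mult_left_mono) auto
    moreover have "0 \<le> r * (1/2::real)^J" using ab by simp
    moreover have "(1/2::real)^n * r = r * (1/2)^n" by simp
    ultimately show ?thesis using e1 e2 by linarith
  qed
  finally show ?thesis .
qed

lemma K_density:
  assumes s: "s > 0" and x: "x \<in> Kset t s" and r: "r > 0" "r \<le> s * hh n / 4"
  shows "measure lebesgue ({x - r<..<x} - Kset t s) \<le> (1/2)^n * r \<or>
         measure lebesgue ({x<..<x+r} - Kset t s) \<le> (1/2)^n * r"
proof -
  define JS where "JS = {j. 4*r \<le> s * hh j}"
  obtain N where N: "(1/2::real)^N < 4*r/s" using real_arch_pow_inv[of "4*r/s" "1/2::real"] r s by auto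
  have JSsub: "JS \<subseteq> {..<N}"
  proof
    fix j assume "j \<in> JS"
    then have "4*r/s \<le> hh j" using s by (simp add: JS_def field_simps)
    moreover have "hh j \<le> (1/2)^j" unfolding hh_def by (intro power_decreasing) (auto simp: aa_def)
    ultimately have "(1/2::real)^N < (1/2)^j" using N by linarith
    then have "j < N" by (simp add: power_strict_decreasing_iff)
    then show "j \<in> {..<N}" by simp
  qed
  have finJS: "finite JS" using JSsub finite_subset by blast
  have nJS: "n \<in> JS" using r by (simp add: JS_def)
  define J where "J = Max JS"
  have JJS: "J \<in> JS" using finJS nJS unfolding J_def by (intro Max_in) auto
  have nJ: "n \<le> J" using finJS nJS unfolding J_def by simp
  have J1: "s * hh (Suc J) < 4 * r"
  proof (rule ccontr)
    assume "\<not> ?thesis"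
    then have "Suc J \<in> JS" by (simp add: JS_def)
    then have "Suc J \<le> J" using finJS unfolding J_def by simp
    then show False by simp
  qed
  have J4: "4 * r \<le> s * hh J" using JJS by (simp add: JS_def)
  from two_sides[OF s x r(1) J4] show ?thesis
  proof
    assume "{x - r<..<x} \<inter> (\<Union>j\<in>{..J}. gapj t s j) = {}"
    then have "measure lebesgue ({x - r<..<x} - Kset t s) \<le> (1/2)^n * r"
      by (intro gap_sub_side[OF s _ r(1) _ J1 nJ]) auto
    then show ?thesis by simp
  next
    assume "{x<..<x+r} \<inter> (\<Union>j\<in>{..J}. gapj t s j) = {}"
    then have "measure lebesgue ({x<..<x+r} - Kset t s) \<le> (1/2)^n * r"
      by (intro gap_sub_side[OF s _ r(1) _ J1 nJ]) auto
    then show ?thesis by simp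
  qed
qed

definition cen :: "nat \<Rightarrow> int \<Rightarrow> real" where "cen L k = of_int (2*k+1) * (1/2)^(L+1)"
definition sig :: "nat \<Rightarrow> real" where "sig L = (1/2)^(2*L+4)"
definition Pc :: "nat \<Rightarrow> int \<Rightarrow> real set" where
  "Pc L k = Kset (cen L k) (sig L) \<inter> {cen L k - sig L/2 .. cen L k + sig L/2}"
definition Eset :: "real set" where "Eset = (\<Union>L. \<Union>k. Pc L k)"

lemma sig_pos: "sig L > 0" by (simp add: sig_def)

lemma hh1: "hh (Suc 0) = 1/16" by (simp add: hh_def aa_def power_one_over)

lemma Pc_closed: "closed (Pc L k)"
  unfolding Pc_def by (intro closed_Int Kset_closed closed_atLeastAtMost)

lemma Pc_sets: "Pc L k \<in> sets lebesgue" using Pc_closed by simp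

lemma Eset_sets: "Eset \<in> sets lebesgue"
proof -
  have "\<Union>(range (Pc L)) \<in> sets lebesgue" for L by (rule sets.countable_UN'') (auto simp: Pc_sets)
  then show ?thesis unfolding Eset_def by (intro sets.countable_UN) auto
qed

lemma Pc_margin:
  assumes "x \<in> Pc L k"
  shows "cen L k - sig L/2 + sig L * rh 1 \<le> x \<and> x \<le> cen L k + sig L/2 - sig L * rh 1"
proof -
  let ?c = "cen L k" and ?s = "sig L"
  have K: "?s * rh 1 \<le> \<bar>x - (?c + of_int k' * (?s * hh 1))\<bar>" for k' :: int
    using assms unfolding Pc_def Kset_def by blast
  have x1: "?c - ?s/2 \<le> x" "x \<le> ?c + ?s/2" using assms unfolding Pc_def by auto
  have "?s * rh 1 \<le> \<bar>x - (?c + ?s/2)\<bar>" using K[of 8] by (simp add: hh1)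
  moreover have "?s * rh 1 \<le> \<bar>x - (?c - ?s/2)\<bar>" using K[of "-8"] by (simp add: hh1)
  moreover have "?s * rh 1 > 0" using sig_pos rh_pos by simp
  ultimately show ?thesis using x1 by (auto simp: abs_if split: if_splits)
qed

definition gam :: "nat \<Rightarrow> real" where "gam n = 1 - (1/2)^(n+1)"
definition del :: "nat \<Rightarrow> real" where "del n = sig n * hh (n+1) * rh 1 / 4"

lemma sig_mono: "L \<le> n \<Longrightarrow> sig n \<le> sig L"
  unfolding sig_def by (intro power_decreasing) auto

lemma hh_le1: "hh j \<le> 1" unfolding hh_def by (simp add: power_le_one)
lemma rh_le1: "rh j \<le> 1" unfolding rh_def by (simp add: power_le_one)

lemma admissible_gd: "admissible_seqs gam del"
  unfolding admissible_seqs_def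
proof (intro conjI allI)
  fix n
  show "0 < gam n"
  proof -
    have "(1/2::real)^(n+1) < 1" using power_strict_decreasing[of 0 "n+1" "1/2::real"] by simp
    then show ?thesis by (simp add: gam_def)
  qed
  show "0 < del n" using sig_pos hh_pos rh_pos by (simp add: del_def)
next
  show "incseq gam"
    unfolding incseq_def gam_def by (auto intro!: power_decreasing)
  show "gam \<longlonglongrightarrow> 1"
  proof -
    have "(\<lambda>n. (1/2::real)^(n+1)) \<longlonglongrightarrow> 0"
      using LIMSEQ_ignore_initial_segment[OF LIMSEQ_power_zero[of "1/2::real"], of 1] by simp
    then have "(\<lambda>n. 1 - (1/2::real)^(n+1)) \<longlonglongrightarrow> 1 - 0" by (intro tendsto_diff) auto
    then show ?thesis by (simp add: gam_def[abs_def])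
  qed
  show "decseq del"
    unfolding decseq_def del_def
  proof (intro allI impI)
    fix m n :: nat assume "m \<le> n"
    then have "sig n \<le> sig m" "hh (n+1) \<le> hh (m+1)" by (auto intro: sig_mono hh_mono)
    then have "sig n * hh (n+1) \<le> sig m * hh (m+1)"
      using sig_pos hh_pos by (intro mult_mono) (auto intro: less_imp_le)
    then show "sig n * hh (n+1) * rh 1 / 4 \<le> sig m * hh (m+1) * rh 1 / 4"
      using rh_pos[of 1] by (intro divide_right_mono mult_right_mono) auto
  qed
  show "del \<longlonglongrightarrow> 0"
  proof (rule Lim_null_comparison)
    show "\<forall>\<^sub>F n in sequentially. norm (del n) \<le> (1/2)^n"
    proof (intro always_eventually allI)
      fix n
      have "sig n \<le> (1/2)^n" unfolding sig_def by (intro power_decreasing) auto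
      moreover have "hh (n+1) * rh 1 / 4 \<le> 1" using hh_le1 rh_le1 hh_pos rh_pos
        by (smt (verit) divide_le_eq_1 mult_le_one)
      ultimately have "sig n * (hh (n+1) * rh 1 / 4) \<le> (1/2)^n * 1"
        using sig_pos hh_pos rh_pos by (intro mult_mono) (auto intro: less_imp_le)
      moreover have "del n > 0" using sig_pos hh_pos rh_pos by (simp add: del_def)
      ultimately show "norm (del n) \<le> (1/2)^n" by (simp add: del_def)
    qed
    show "(\<lambda>n. (1/2::real)^n) \<longlonglongrightarrow> 0" by (rule LIMSEQ_power_zero) simp
  qed
qed

lemma side_measure:
  assumes T: "T = {a<..<b}" "b - a = r" "r > 0"
    and D: "measure lebesgue (T - Eset) \<le> q * r"
  shows "measure lebesgue (T \<inter> Eset) / r \<ge> 1 - q"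
proof -
  have Tfm: "T \<in> lmeasurable" using T by simp
  have "measure lebesgue (T - (T \<inter> Eset)) = measure lebesgue T - measure lebesgue (T \<inter> Eset)"
    by (rule measurable_measure_Diff[OF Tfm]) (use Eset_sets T in auto)
  moreover have "T - (T \<inter> Eset) = T - Eset" by auto
  moreover have "measure lebesgue T = r" using T by simp
  ultimately have "measure lebesgue (T \<inter> Eset) \<ge> r - q * r" using D by simp
  then have "measure lebesgue (T \<inter> Eset) \<ge> (1 - q) * r" by (simp add: algebra_simps)
  then show ?thesis using T(3) by (simp add: field_simps)
qed

lemma Eset_dens:
  assumes x: "x \<in> Pc L k" and n: "L \<le> n"
  shows "x \<in> dens_set Eset (gam n) (del n)"
  unfolding dens_set_def
proof (intro CollectI ballI)
  fix r assume "r \<in> {0<..del n}"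
  then have r0: "0 < r" and r1: "r \<le> del n" by auto
  let ?c = "cen L k" and ?s = "sig L"
  have s: "?s > 0" by (rule sig_pos)
  have dle: "del n \<le> ?s * rh 1"
  proof -
    have "sig n * hh (n+1) \<le> ?s * 1" using sig_mono[OF n] hh_le1 sig_pos hh_pos
      by (intro mult_mono) (auto intro: less_imp_le)
    then have "sig n * hh (n+1) * rh 1 \<le> ?s * rh 1" using rh_pos[of 1] by (intro mult_right_mono) auto
    moreover have "0 < sig n * hh (n+1) * rh 1" using sig_pos hh_pos rh_pos by simp
    ultimately show ?thesis unfolding del_def by linarith
  qed
  have dle2: "del n \<le> ?s * hh (n+1) / 4"
  proof -
    have "sig n * rh 1 \<le> ?s * 1" using sig_mono[OF n] rh_le1 sig_pos rh_pos
      by (intro mult_mono) (auto intro: less_imp_le)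
    then have "sig n * rh 1 * hh (n+1) \<le> ?s * hh (n+1)" using hh_pos[of "n+1"] by (intro mult_right_mono) auto
    then show ?thesis unfolding del_def by (simp add: algebra_simps)
  qed
  have xK: "x \<in> Kset ?c ?s" using x by (simp add: Pc_def)
  have mg: "?c - ?s/2 + ?s * rh 1 \<le> x \<and> x \<le> ?c + ?s/2 - ?s * rh 1" by (rule Pc_margin[OF x])
  have rs: "r \<le> ?s * rh 1" using r1 dle by linarith
  have keyT: "measure lebesgue (T - Eset) \<le> (1/2)^(n+1) * r"
    if T: "T \<subseteq> {?c - ?s/2 .. ?c + ?s/2}" "measure lebesgue (T - Kset ?c ?s) \<le> (1/2)^(n+1) * r" "T = {a<..<b}"
    for T a b
  proof -
    have "T - Eset \<subseteq> T - Kset ?c ?s"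
    proof
      fix y assume y: "y \<in> T - Eset"
      show "y \<in> T - Kset ?c ?s"
      proof (rule ccontr)
        assume "y \<notin> T - Kset ?c ?s"
        then have "y \<in> Pc L k" using y T(1) unfolding Pc_def by auto
        then show False using y unfolding Eset_def by auto
      qed
    qed
    moreover have "T - Kset ?c ?s \<in> lmeasurable"
      using T(3) by (intro fmeasurableI2[OF lmeasurable_interval(2)]) (auto simp: Kset_sets)
    ultimately have "measure lebesgue (T - Eset) \<le> measure lebesgue (T - Kset ?c ?s)"
      by (intro measure_mono_fmeasurable) (use T(3) Eset_sets in auto)
    then show ?thesis using T(2) by linarith
  qed
  from K_density[OF s xK r0 order.trans[OF r1 dle2]]
  show "gam n \<le> max (measure lebesgue ({x - r<..<x} \<inter> Eset) / r) (measure lebesgue ({x<..<x + r} \<inter> Eset) / r)"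
  proof
    assume h: "measure lebesgue ({x - r<..<x} - Kset ?c ?s) \<le> (1/2)^(n+1) * r"
    have "{x - r<..<x} \<subseteq> {?c - ?s/2 .. ?c + ?s/2}" using mg rs by auto
    then have "measure lebesgue ({x - r<..<x} - Eset) \<le> (1/2)^(n+1) * r" using keyT h by blast
    then have "measure lebesgue ({x - r<..<x} \<inter> Eset) / r \<ge> 1 - (1/2)^(n+1)"
      by (intro side_measure[OF refl _ r0]) auto
    then show ?thesis unfolding gam_def by simp
  next
    assume h: "measure lebesgue ({x<..<x + r} - Kset ?c ?s) \<le> (1/2)^(n+1) * r"
    have "{x<..<x + r} \<subseteq> {?c - ?s/2 .. ?c + ?s/2}" using mg rs by auto
    then have "measure lebesgue ({x<..<x + r} - Eset) \<le> (1/2)^(n+1) * r" using keyT h by blast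
    then have "measure lebesgue ({x<..<x + r} \<inter> Eset) / r \<ge> 1 - (1/2)^(n+1)"
      by (intro side_measure[OF refl _ r0]) auto
    then show ?thesis unfolding gam_def by simp
  qed
qed

lemma SUDT_Eset: "SUDT Eset"
  unfolding SUDT_def
proof (intro conjI exI)
  show "Eset \<in> sets lebesgue" by (rule Eset_sets)
  show "admissible_seqs gam del" by (rule admissible_gd)
  show "Eset \<subseteq> (\<Union>k. \<Inter>n\<in>{k..}. dens_set Eset (gam n) (del n))"
  proof
    fix x assume "x \<in> Eset"
    then obtain L k where x: "x \<in> Pc L k" unfolding Eset_def by auto
    then have "x \<in> (\<Inter>n\<in>{L..}. dens_set Eset (gam n) (del n))" using Eset_dens by auto
    then show "x \<in> (\<Union>k. \<Inter>n\<in>{k..}. dens_set Eset (gam n) (del n))" by auto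
  qed
qed

lemma Pc_lmeas: "Pc L k \<in> lmeasurable"
  by (rule fmeasurableI2[OF lmeasurable_interval(1) _ Pc_sets]) (auto simp: Pc_def)

lemma rh0: "rh 0 = 1/16" by (simp add: rh_def power2_eq_square power_one_over)

lemma Pc_pos: "measure lebesgue (Pc L k) > 0"
proof -
  let ?c = "cen L k" and ?s = "sig L"
  define I where "I = {?c - ?s/2 <..< ?c + ?s/2}"
  have s: "?s > 0" by (rule sig_pos)
  have sub: "I - Kset ?c ?s \<subseteq> I \<inter> (\<Union>j\<in>{0..}. gapj ?c ?s j)" unfolding Kset_eq by auto
  have fm: "I \<inter> (\<Union>j\<in>{0..}. gapj ?c ?s j) \<in> lmeasurable"
    unfolding I_def by (rule fmeasurableI2[OF lmeasurable_interval(2)]) (auto simp: gapj_open)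
  have "measure lebesgue (I - Kset ?c ?s) \<le> measure lebesgue (I \<inter> (\<Union>j\<in>{0..}. gapj ?c ?s j))"
    by (rule measure_mono_fmeasurable[OF sub _ fm]) (auto simp: I_def Kset_sets)
  also have "\<dots> \<le> ((?c + ?s/2) - (?c - ?s/2)) * (1/2)^(0+2) + 6 * ?s * rh 0"
    unfolding I_def by (rule gap_measure) (use s in auto)
  also have "\<dots> = 5/8 * ?s" by (simp add: rh0)
  finally have d: "measure lebesgue (I - Kset ?c ?s) \<le> 5/8 * ?s" .
  have Ifm: "I \<in> lmeasurable" by (simp add: I_def)
  have "measure lebesgue (I - (I \<inter> Kset ?c ?s)) = measure lebesgue I - measure lebesgue (I \<inter> Kset ?c ?s)"
    by (rule measurable_measure_Diff[OF Ifm]) (auto simp: I_def Kset_sets)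
  moreover have "I - (I \<inter> Kset ?c ?s) = I - Kset ?c ?s" by auto
  moreover have "measure lebesgue I = ?s" using s by (simp add: I_def)
  ultimately have "measure lebesgue (I \<inter> Kset ?c ?s) \<ge> 3/8 * ?s" using d by simp
  moreover have "measure lebesgue (I \<inter> Kset ?c ?s) \<le> measure lebesgue (Pc L k)"
    by (rule measure_mono_fmeasurable[OF _ _ Pc_lmeas]) (auto simp: I_def Pc_def Kset_sets)
  ultimately show ?thesis using s by linarith
qed

lemma Epos:
  assumes ab: "a < b"
  shows "measure lebesgue (Eset \<inter> {a<..<b}) > 0"
proof -
  obtain L where L: "(1/2::real)^L < (b - a)/4" using real_arch_pow_inv[of "(b-a)/4" "1/2::real"] ab by auto
  define u :: real where "u = (1/2)^L"
  have u: "u > 0" by (simp add: u_def)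
  define k :: int where "k = \<lfloor>a / u\<rfloor> + 1"
  have k1: "a < of_int k * u"
  proof -
    have "a / u < of_int k" unfolding k_def by linarith
    then show ?thesis using u by (simp add: field_simps)
  qed
  have k2: "of_int k * u \<le> a + u"
  proof -
    have "of_int k \<le> a / u + 1" unfolding k_def by linarith
    then have "of_int k * u \<le> (a / u + 1) * u" using u by (intro mult_right_mono) auto
    moreover have "(a / u + 1) * u = a + u" using u by (simp add: field_simps)
    ultimately show ?thesis by linarith
  qed
  have cen: "cen L k = of_int k * u + u/2"
    by (simp add: cen_def u_def algebra_simps)
  have sig: "sig L \<le> u"
    unfolding sig_def u_def by (intro power_decreasing) auto
  have sub: "Pc L k \<subseteq> Eset \<inter> {a<..<b}"
  proof
    fix y assume y: "y \<in> Pc L k"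
    then have "cen L k - sig L/2 \<le> y" "y \<le> cen L k + sig L/2" by (auto simp: Pc_def)
    moreover have Lu0: "u < (b-a)/4" using L by (simp add: u_def)
    then have Lu: "4 * u < b - a" by (simp add: field_simps)
    ultimately have "a < y" "y < b" using cen sig k1 k2 u sig_pos[of L] by linarith+
    then show "y \<in> Eset \<inter> {a<..<b}" using y unfolding Eset_def by auto
  qed
  have "measure lebesgue (Pc L k) \<le> measure lebesgue (Eset \<inter> {a<..<b})"
    by (rule measure_mono_fmeasurable[OF sub Pc_sets])
       (rule fmeasurableI2[OF lmeasurable_interval(2)], auto intro: Eset_sets)
  then show ?thesis using Pc_pos[of L k] by linarith
qed

lemma two_pow_half: "a \<le> N \<Longrightarrow> (2::real)^(N - a) * (1/2)^N = (1/2)^a"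
proof -
  assume "a \<le> N"
  then have "(1/2::real)^N = (1/2)^a * (1/2)^(N-a)" by (simp add: power_add[symmetric])
  then show ?thesis by (simp add: power_one_over)
qed

lemma d_notin:
  assumes d: "d = of_int m * (1/2)^M"
  shows "d \<notin> Pc L k"
proof
  assume "d \<in> Pc L k"
  then have K: "d \<in> Kset (cen L k) (sig L)" by (simp add: Pc_def)
  define N where "N = 2*L+4 + aa M"
  have NM: "M \<le> N" by (simp add: N_def aa_def)
  have NL: "L+1 \<le> N" by (simp add: N_def)
  define k' :: int where "k' = m * 2^(N - M) - (2*k+1) * 2^(N - (L+1))"
  have sh: "sig L * hh M = (1/2)^N" by (simp add: sig_def hh_def N_def power_add)
  have "of_int k' * (sig L * hh M) = of_int m * ((2::real)^(N - M) * (1/2)^N) - of_int (2*k+1) * ((2::real)^(N - (L+1)) * (1/2)^N)"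
    unfolding sh k'_def by (simp add: algebra_simps)
  also have "\<dots> = d - cen L k" using two_pow_half[OF NM] two_pow_half[OF NL] by (simp add: d cen_def)
  finally have e: "cen L k + of_int k' * (sig L * hh M) = d" by simp
  have "sig L * rh M \<le> \<bar>d - (cen L k + of_int k' * (sig L * hh M))\<bar>" using K unfolding Kset_def by blast
  moreover have "0 < sig L * rh M" using sig_pos[of L] rh_pos[of M] by simp
  ultimately show False using e by simp
qed

lemma sig_p: "sig L = ((1/2)^L)^2 / 16"
proof -
  have "sig L = ((1/2::real)^L)^2 * (1/2)^4" unfolding sig_def
    by (simp add: power_add power_mult[symmetric] mult.commute)
  then show ?thesis by (simp add: power_one_over)
qed

lemma cen_p: "cen L k = (1/2)^L / 2 + of_int k * (1/2)^L"
  by (simp add: cen_def algebra_simps)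

lemma cen_dist:
  assumes hML: "M < L" and d: "d = of_int m * (1/2)^M"
  shows "\<bar>cen L k - d\<bar> \<ge> (1/2)^L / 2"
proof -
  have h: "(2::real)^(L+1-M) * (1/2)^(L+1) = (1/2)^M" by (rule two_pow_half) (use hML in auto)
  define z :: int where "z = 2*k+1 - m*2^(L+1-M)"
  have eq: "cen L k - d = of_int z * (1/2)^(L+1)"
    unfolding z_def cen_def d h[symmetric] by (simp add: algebra_simps)
  have "z \<noteq> 0"
  proof -
    have "L + 1 - M = Suc (L - M)" using hML by simp
    then have "z = 2 * (k - m*2^(L-M)) + 1" unfolding z_def by (simp add: algebra_simps)
    then show ?thesis by presburger
  qed
  then have z1: "(1::real) \<le> \<bar>of_int z\<bar>" by linarith
  have "\<bar>cen L k - d\<bar> = \<bar>of_int z\<bar> * (1/2::real)^(L+1)" unfolding eq abs_mult by simp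
  moreover have "\<bar>of_int z\<bar> * (1/2::real)^(L+1) \<ge> 1 * (1/2)^(L+1)"
    using z1 by (intro mult_right_mono) auto
  ultimately show ?thesis by simp
qed

lemma fine_level:
  assumes hML: "M < L" and d: "d = of_int m * (1/2)^M" and r: "r > 0"
  shows "measure lebesgue ({d - r<..<d + r} \<inter> (\<Union>k. Pc L k)) \<le> r * (1/2)^L"
proof -
  define p :: real where "p = (1/2)^L"
  have p0: "p > 0" by (simp add: p_def)
  have p1: "p \<le> 1" by (simp add: p_def power_le_one)
  have sp: "sig L = p^2/16" by (simp add: sig_p p_def)
  have cp: "cen L k = p/2 + of_int k * p" for k by (simp add: cen_p p_def)
  show ?thesis
  proof (cases "r \<le> p/4")
    case True
    have "{d - r<..<d + r} \<inter> (\<Union>k. Pc L k) = {}"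
    proof (rule ccontr)
      assume "\<not> ?thesis"
      then obtain y k where y: "y \<in> Pc L k" "d - r < y" "y < d + r" by auto
      have "cen L k - sig L/2 \<le> y" "y \<le> cen L k + sig L/2" using y(1) by (auto simp: Pc_def)
      moreover have "sig L / 2 \<le> p/4"
      proof -
        have "p^2 \<le> p" using p0 p1 by (simp add: power2_eq_square mult_le_cancel_left1)
        then show ?thesis using sp p0 by linarith
      qed
      moreover have "\<bar>cen L k - d\<bar> \<ge> p/2" using cen_dist[OF hML d] by (simp add: p_def)
      ultimately show False using y(2,3) True
      proof (cases "d \<le> cen L k")
        case True
        then have "cen L k - d \<ge> p/2" using \<open>\<bar>cen L k - d\<bar> \<ge> p/2\<close> by simp
        then show False using y(2,3) \<open>r \<le> p/4\<close> \<open>cen L k - sig L/2 \<le> y\<close> \<open>sig L / 2 \<le> p/4\<close> by linarith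
      next
        case False
        then have "d - cen L k \<ge> p/2" using \<open>\<bar>cen L k - d\<bar> \<ge> p/2\<close> by simp
        then show False using y(2,3) \<open>r \<le> p/4\<close> \<open>y \<le> cen L k + sig L/2\<close> \<open>sig L / 2 \<le> p/4\<close> by linarith
      qed
    qed
    then show ?thesis using r p0 by (simp add: p_def)
  next
    case False
    then have rp: "p < 4*r" by simp
    have "measure lebesgue ({d - r<..<d + r} \<inter> (\<Union>k. Pc L k))
        \<le> (((d + r) - (d - r) + 2*(p^2/32))/p + 1) * (2*(p^2/32))"
    proof (rule count_measure[where t="p/2"])
      show "0 < p" by (rule p0)
      show "0 \<le> p^2/32" by simp
      show "d - r \<le> d + r" using r by simp
      show "Pc L k \<subseteq> {p/2 + of_int k * p - p^2/32 .. p/2 + of_int k * p + p^2/32}" for k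
      proof -
        have "Pc L k \<subseteq> {cen L k - sig L/2 .. cen L k + sig L/2}" unfolding Pc_def by (rule Int_lower2)
        moreover have "cen L k - sig L/2 = p/2 + of_int k * p - p^2/32" "cen L k + sig L/2 = p/2 + of_int k * p + p^2/32"
          by (simp_all add: cp sp)
        ultimately show ?thesis by simp
      qed
      show "Pc L k \<in> sets lebesgue" for k by (rule Pc_sets)
    qed
    also have "\<dots> = r*p/8 + p^3/256 + p^2/16" using p0 by (simp add: field_simps power2_eq_square power3_eq_cube)
    also have "\<dots> \<le> r * p"
    proof -
      have "p^3 \<le> p^2" using p0 p1 by (simp add: power3_eq_cube power2_eq_square mult_le_cancel_left1)
      moreover have "p^2 \<le> 4*(r*p)" using rp p0 by (simp add: power2_eq_square)
      moreover have "0 < r * p" using r p0 by simp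
      ultimately show ?thesis by linarith
    qed
    finally show ?thesis by (simp add: p_def)
  qed
qed

lemma Pc_near: "y \<in> Pc L k \<Longrightarrow> \<bar>y - cen L k\<bar> \<le> 1/32"
proof -
  assume "y \<in> Pc L k"
  then have "cen L k - sig L/2 \<le> y" "y \<le> cen L k + sig L/2" by (auto simp: Pc_def)
  moreover have "sig L \<le> 1/16"
  proof -
    have "(1/2::real)^(2*L+4) \<le> (1/2)^4" by (intro power_decreasing) auto
    then show ?thesis by (simp add: sig_def power_one_over)
  qed
  ultimately show ?thesis unfolding abs_le_iff by linarith
qed

lemma KS_finite: "finite {k::int. \<bar>cen L k - d\<bar> \<le> 1}"
proof -
  define B :: int where "B = \<lceil>(\<bar>d\<bar> + 1) * 2^(L+1)\<rceil>"
  have "{k::int. \<bar>cen L k - d\<bar> \<le> 1} \<subseteq> {-B..B}"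
  proof
    fix k :: int assume "k \<in> {k. \<bar>cen L k - d\<bar> \<le> 1}"
    then have "\<bar>cen L k - d\<bar> \<le> 1" by simp
    then have "\<bar>cen L k\<bar> \<le> \<bar>d\<bar> + 1" using abs_triangle_ineq[of "cen L k - d" d] by simp
    then have "\<bar>of_int (2*k+1)\<bar> * (1/2::real)^(L+1) \<le> \<bar>d\<bar> + 1" by (simp add: cen_def abs_mult)
    then have "\<bar>of_int (2*k+1)\<bar> * (1/2::real)^(L+1) * 2^(L+1) \<le> (\<bar>d\<bar> + 1) * 2^(L+1)"
      by (intro mult_right_mono) auto
    then have a: "\<bar>of_int (2*k+1)\<bar> \<le> (\<bar>d\<bar> + 1) * (2::real)^(L+1)" by (simp add: power_one_over)
    have "\<bar>k\<bar> \<le> \<bar>2*k+1\<bar>" by (auto simp: abs_if)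
    then have "real_of_int \<bar>k\<bar> \<le> real_of_int \<bar>2*k+1\<bar>" by (simp only: of_int_le_iff)
    moreover have "real_of_int \<bar>2*k+1\<bar> = \<bar>of_int (2*k+1)\<bar>" by (simp only: of_int_abs)
    ultimately have "real_of_int \<bar>k\<bar> \<le> (\<bar>d\<bar> + 1) * (2::real)^(L+1)" using a by linarith
    then have "real_of_int \<bar>k\<bar> \<le> real_of_int B" unfolding B_def by (meson le_of_int_ceiling order_trans)
    then have "\<bar>k\<bar> \<le> B" by simp
    then show "k \<in> {-B..B}" by auto
  qed
  then show ?thesis by (rule finite_subset) simp
qed

lemma UPc_sets: "(\<Union>k. Pc L k) \<in> sets lebesgue"
  by (rule sets.countable_UN'') (auto simp: Pc_sets)

lemma holes:
  assumes M: "1 \<le> M" and d: "d = of_int m * (1/2)^M"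
  shows "\<exists>r0>0. \<forall>r. 0 < r \<and> r \<le> r0 \<longrightarrow> measure lebesgue (Eset \<inter> {d - r<..<d + r}) \<le> r/2"
proof -
  define F where "F = (\<Union>L\<in>{..M}. \<Union>k\<in>{k::int. \<bar>cen L k - d\<bar> \<le> 1}. Pc L k)"
  have cF: "closed F" unfolding F_def
    by (intro closed_UN KS_finite ballI Pc_closed) auto
  have dF: "d \<notin> F" unfolding F_def using d_notin[OF d] by auto
  obtain e where e: "e > 0" "ball d e \<subseteq> - F"
    using cF dF open_contains_ball[of "- F"] by (auto simp: closed_def)
  define r0 where "r0 = min e (1/2)"
  show ?thesis
  proof (intro exI[of _ r0] conjI allI impI)
    show "r0 > 0" using e by (simp add: r0_def)
    fix r assume r: "0 < r \<and> r \<le> r0"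
    define W where "W = {d - r<..<d + r}"
    have sub: "Eset \<inter> W \<subseteq> (\<Union>L\<in>{Suc M..}. W \<inter> (\<Union>k. Pc L k))"
    proof
      fix y assume y: "y \<in> Eset \<inter> W"
      then obtain L k where yP: "y \<in> Pc L k" unfolding Eset_def by auto
      have yW: "\<bar>y - d\<bar> < r" using y by (auto simp: W_def abs_less_iff)
      have "\<not> L \<le> M"
      proof
        assume LM: "L \<le> M"
        show False
        proof (cases "\<bar>cen L k - d\<bar> \<le> 1")
          case True
          then have "y \<in> F" using LM yP unfolding F_def by auto
          moreover have "y \<in> ball d e"
          proof -
            have "\<bar>d - y\<bar> = \<bar>y - d\<bar>" by (rule abs_minus_commute)
            moreover have "r \<le> e" using r by (simp add: r0_def)
            ultimately show ?thesis using yW by (simp add: dist_real_def)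
          qed
          ultimately show False using e by auto
        next
          case False
          have t: "\<bar>cen L k - d\<bar> \<le> \<bar>cen L k - y\<bar> + \<bar>y - d\<bar>" using abs_triangle_ineq[of "cen L k - y" "y - d"] by simp
          have "\<bar>cen L k - y\<bar> = \<bar>y - cen L k\<bar>" by (rule abs_minus_commute)
          moreover have "r \<le> 1/2" using r by (simp add: r0_def)
          ultimately show False using t False Pc_near[OF yP] yW by linarith
        qed
      qed
      then show "y \<in> (\<Union>L\<in>{Suc M..}. W \<inter> (\<Union>k. Pc L k))" using y yP by auto
    qed
    have fmA: "W \<inter> (\<Union>k. Pc L k) \<in> lmeasurable" for L
      unfolding W_def by (rule fmeasurableI2[OF lmeasurable_interval(2)]) (auto intro: UPc_sets)
    have bound: "measure lebesgue (\<Union>L\<in>I'. W \<inter> (\<Union>k. Pc L k)) \<le> r/2"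
      if I': "I' \<subseteq> {Suc M..}" "finite I'" for I'
    proof -
      have "measure lebesgue (\<Union>L\<in>I'. W \<inter> (\<Union>k. Pc L k)) \<le> (\<Sum>L\<in>I'. measure lebesgue (W \<inter> (\<Union>k. Pc L k)))"
        using fmA by (intro measure_UNION_le I'(2)) auto
      also have "\<dots> \<le> (\<Sum>L\<in>I'. r * (1/2)^(Suc M) * (1/2)^(L - Suc M))"
      proof (rule sum_mono)
        fix L assume "L \<in> I'"
        then have LM: "Suc M \<le> L" using I' by auto
        have "L = Suc M + (L - Suc M)" using LM by simp
        then have P: "(1/2::real)^L = (1/2)^(Suc M) * (1/2)^(L - Suc M)" by (metis power_add)
        have m: "measure lebesgue (W \<inter> (\<Union>k. Pc L k)) \<le> r * (1/2)^L"
          unfolding W_def by (rule fine_level[OF _ d]) (use LM r in auto)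
        show "measure lebesgue (W \<inter> (\<Union>k. Pc L k)) \<le> r * (1/2)^(Suc M) * (1/2)^(L - Suc M)"
          using m[unfolded P] by (simp only: mult.assoc)
      qed
      also have "\<dots> = r * (1/2)^(Suc M) * (\<Sum>L\<in>I'. (1/2)^(L - Suc M))" by (simp add: sum_distrib_left)
      also have "\<dots> \<le> r * (1/2)^(Suc M) * 2"
        using geo_sum_bound[OF I'(2) I'(1)] r by (intro mult_left_mono) auto
      also have "\<dots> = r * (1/2)^M" by simp
      also have "\<dots> \<le> r * (1/2)^1" using M r by (intro mult_left_mono power_decreasing) auto
      finally show ?thesis by simp
    qed
    have fmU: "(\<Union>L\<in>{Suc M..}. W \<inter> (\<Union>k. Pc L k)) \<in> lmeasurable"
    proof (rule fmeasurable_UN_bound[where B="r/2"])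
      show "countable {Suc M..}" by simp
      show "\<And>L. L \<in> {Suc M..} \<Longrightarrow> W \<inter> (\<Union>k. Pc L k) \<in> lmeasurable" using fmA by blast
      show "\<And>I'. I' \<subseteq> {Suc M..} \<Longrightarrow> finite I' \<Longrightarrow> measure lebesgue (\<Union>L\<in>I'. W \<inter> (\<Union>k. Pc L k)) \<le> r/2"
        by (rule bound)
    qed
    have EW: "Eset \<inter> W \<in> sets lebesgue" unfolding W_def by (intro sets.Int Eset_sets) simp
    have "measure lebesgue (Eset \<inter> W) \<le> measure lebesgue (\<Union>L\<in>{Suc M..}. W \<inter> (\<Union>k. Pc L k))"
      by (rule measure_mono_fmeasurable[OF sub EW fmU])
    also have "\<dots> \<le> r/2"
    proof (rule measure_UN_bound)
      show "countable {Suc M..}" by simp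
      show "\<And>L. L \<in> {Suc M..} \<Longrightarrow> W \<inter> (\<Union>k. Pc L k) \<in> lmeasurable" using fmA by blast
      show "\<And>I'. I' \<subseteq> {Suc M..} \<Longrightarrow> finite I' \<Longrightarrow> measure lebesgue (\<Union>L\<in>I'. W \<inter> (\<Union>k. Pc L k)) \<le> r/2"
        by (rule bound)
    qed
    finally show "measure lebesgue (Eset \<inter> {d - r<..<d + r}) \<le> r/2" by (simp add: W_def)
  qed
qed

lemma Eset_fsigma: "fsigma_in euclideanreal Eset"
  unfolding Eset_def
proof (rule fsigma_in_Union)
  show "countable (range (\<lambda>L. \<Union>k. Pc L k))" by simp
  fix S assume "S \<in> range (\<lambda>L. \<Union>k. Pc L k)"
  then obtain L where S: "S = (\<Union>k. Pc L k)" by auto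
  show "fsigma_in euclideanreal S" unfolding S
  proof (rule fsigma_in_Union)
    show "countable (range (Pc L))" by simp
    fix T assume "T \<in> range (Pc L)"
    then obtain k where T: "T = Pc L k" by auto
    have "closedin euclidean (Pc L k)" using Pc_closed[of L k] closed_closedin by blast
    then show "fsigma_in euclideanreal T" unfolding T by (rule closed_imp_fsigma_in)
  qed
qed

lemma measure_eq_null_diff:
  assumes A: "A \<in> sets lebesgue" and E: "E \<in> sets lebesgue" and E': "E' \<in> sets lebesgue"
    and N: "emeasure lebesgue ((E - E') \<union> (E' - E)) = 0"
  shows "measure lebesgue (A \<inter> E) = measure lebesgue (A \<inter> E')"
proof -
  define N where "N = (E - E') \<union> (E' - E)"
  have Ns: "N \<in> sets lebesgue" unfolding N_def using E E' by auto
  have le: "emeasure lebesgue (A \<inter> X) \<le> emeasure lebesgue (A \<inter> Y)"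
    if X: "X \<in> sets lebesgue" and Y: "Y \<in> sets lebesgue" and sub: "X \<subseteq> Y \<union> N" for X Y
  proof -
    have "emeasure lebesgue (A \<inter> X) \<le> emeasure lebesgue ((A \<inter> Y) \<union> N)"
      by (rule emeasure_mono) (use sub A Y Ns in auto)
    also have "\<dots> \<le> emeasure lebesgue (A \<inter> Y) + emeasure lebesgue N"
      by (rule emeasure_subadditive) (use A Y Ns in auto)
    also have "\<dots> = emeasure lebesgue (A \<inter> Y)" using N by (simp add: N_def)
    finally show ?thesis .
  qed
  have "emeasure lebesgue (A \<inter> E) = emeasure lebesgue (A \<inter> E')"
    using le[OF E E'] le[OF E' E] unfolding N_def by (intro antisym) auto
  then show ?thesis by (simp add: measure_def)
qed

lemma dens_set_eq:
  assumes E: "E \<in> sets lebesgue" and E': "E' \<in> sets lebesgue"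
    and N: "emeasure lebesgue ((E - E') \<union> (E' - E)) = 0"
  shows "dens_set E' g dl = dens_set E g dl"
  unfolding dens_set_def
  using measure_eq_null_diff[OF _ E E' N] by simp

lemma interval_lip:
  assumes E: "E \<in> sets lebesgue" and "a \<le> b" "a' \<le> b'"
  shows "measure lebesgue ({a<..<b} \<inter> E) \<le> measure lebesgue ({a'<..<b'} \<inter> E) + \<bar>a - a'\<bar> + \<bar>b - b'\<bar>"
proof -
  have sub: "{a<..<b} \<inter> E \<subseteq> ({a'<..<b'} \<inter> E) \<union> {min a a' .. max a a'} \<union> {min b b' .. max b b'}"
    by auto
  have "measure lebesgue ({a<..<b} \<inter> E) \<le> measure lebesgue (({a'<..<b'} \<inter> E) \<union> {min a a' .. max a a'} \<union> {min b b' .. max b b'})"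
  proof (rule measure_mono_fmeasurable[OF sub])
    show "{a<..<b} \<inter> E \<in> sets lebesgue" using E by (intro sets.Int) auto
    have "{a'<..<b'} \<inter> E \<in> lmeasurable" using E by (intro fmeasurableI2[OF lmeasurable_interval(2)]) auto
    then show "({a'<..<b'} \<inter> E) \<union> {min a a' .. max a a'} \<union> {min b b' .. max b b'} \<in> lmeasurable"
      by (intro fmeasurable.Un lmeasurable_interval(1))
  qed
  also have "\<dots> \<le> measure lebesgue (({a'<..<b'} \<inter> E) \<union> {min a a' .. max a a'}) + measure lebesgue {min b b' .. max b b'}"
    using E by (intro measure_Un_le sets.Un sets.Int) simp_all
  also have "\<dots> \<le> measure lebesgue ({a'<..<b'} \<inter> E) + measure lebesgue {min a a' .. max a a'} + measure lebesgue {min b b' .. max b b'}"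
  proof -
    have "{a'<..<b'} \<inter> E \<in> sets lebesgue" using E by (intro sets.Int) auto
    then show ?thesis using measure_Un_le[of "{a'<..<b'} \<inter> E" lebesgue "{min a a' .. max a a'}"] by simp
  qed
  also have "\<dots> = measure lebesgue ({a'<..<b'} \<inter> E) + \<bar>a - a'\<bar> + \<bar>b - b'\<bar>"
    by (simp add: abs_if max_def min_def)
  finally show ?thesis .
qed

definition Fm :: "real \<Rightarrow> real \<Rightarrow> real" where
  "Fm x r = max (measure lebesgue ({x - r<..<x} \<inter> Eset) / r) (measure lebesgue ({x<..<x + r} \<inter> Eset) / r)"

definition Sk :: "nat \<Rightarrow> real set" where
  "Sk k = {x. \<exists>r. 0 < r \<and> r < 1/(Suc k) \<and> Fm x r < 3/4}"

lemma Fm_lip: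
  assumes r: "r > 0"
  shows "Fm y r \<le> Fm x r + 2 * \<bar>y - x\<bar> / r"
proof -
  have 1: "measure lebesgue ({y - r<..<y} \<inter> Eset) \<le> measure lebesgue ({x - r<..<x} \<inter> Eset) + 2 * \<bar>y - x\<bar>"
    using interval_lip[OF Eset_sets, of "y - r" y "x - r" x] r by simp
  have 2: "measure lebesgue ({y<..<y + r} \<inter> Eset) \<le> measure lebesgue ({x<..<x + r} \<inter> Eset) + 2 * \<bar>y - x\<bar>"
    using interval_lip[OF Eset_sets, of y "y + r" x "x + r"] r by simp
  have "measure lebesgue ({y - r<..<y} \<inter> Eset) / r \<le> measure lebesgue ({x - r<..<x} \<inter> Eset) / r + 2 * \<bar>y - x\<bar> / r"
    using divide_right_mono[OF 1, of r] r by (simp add: add_divide_distrib)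
  moreover have "measure lebesgue ({y<..<y + r} \<inter> Eset) / r \<le> measure lebesgue ({x<..<x + r} \<inter> Eset) / r + 2 * \<bar>y - x\<bar> / r"
    using divide_right_mono[OF 2, of r] r by (simp add: add_divide_distrib)
  ultimately show ?thesis unfolding Fm_def by linarith
qed

lemma Sk_open: "open (Sk k)"
  unfolding open_dist
proof (intro ballI)
  fix x assume "x \<in> Sk k"
  then obtain r where r: "0 < r" "r < 1/(Suc k)" "Fm x r < 3/4" by (auto simp: Sk_def)
  define e where "e = (3/4 - Fm x r) * r / 2"
  have e: "e > 0" using r by (simp add: e_def)
  show "\<exists>e>0. \<forall>y. dist y x < e \<longrightarrow> y \<in> Sk k"
  proof (intro exI[of _ e] conjI allI impI e)
    fix y assume "dist y x < e"
    then have yx: "\<bar>y - x\<bar> < e" by (simp add: dist_real_def)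
    have "2 * \<bar>y - x\<bar> / r < 2 * e / r" using yx r(1) by (simp add: divide_strict_right_mono)
    also have "2 * e / r = 3/4 - Fm x r" using r(1) by (simp add: e_def)
    finally have "Fm y r < 3/4" using Fm_lip[OF r(1), of y x] by linarith
    then show "y \<in> Sk k" using r by (auto simp: Sk_def)
  qed
qed

lemma dyadic_in:
  assumes ab: "a < b"
  shows "\<exists>M m d. 1 \<le> M \<and> d = of_int m * (1/2::real)^M \<and> a < d \<and> d < b"
proof -
  obtain M0 where M0: "(1/2::real)^M0 < b - a" using real_arch_pow_inv[of "b - a" "1/2::real"] ab by auto
  define M where "M = Suc M0"
  have "(1/2::real)^M \<le> (1/2)^M0" unfolding M_def by (intro power_decreasing) auto
  then have M: "(1/2::real)^M < b - a" using M0 by linarith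
  define u :: real where "u = (1/2)^M"
  have u: "u > 0" by (simp add: u_def)
  have ub: "u < b - a" using M by (simp add: u_def)
  define m :: int where "m = \<lfloor>a / u\<rfloor> + 1"
  have k1: "a < of_int m * u"
  proof -
    have "a / u < of_int m" unfolding m_def by linarith
    then show ?thesis using u by (simp add: field_simps)
  qed
  have k2: "of_int m * u \<le> a + u"
  proof -
    have "of_int m \<le> a / u + 1" unfolding m_def by linarith
    then have "of_int m * u \<le> (a / u + 1) * u" using u by (intro mult_right_mono) auto
    moreover have "(a / u + 1) * u = a + u" using u by (simp add: field_simps)
    ultimately show ?thesis by linarith
  qed
  have "1 \<le> M" by (simp add: M_def)
  moreover have "of_int m * u = of_int m * (1/2::real)^M" by (simp add: u_def)
  moreover have "of_int m * u < b" using k2 ub by linarith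
  ultimately show ?thesis using k1 by blast
qed

lemma Sk_dense: "a < b \<Longrightarrow> \<exists>x\<in>Sk k. a < x \<and> x < b"
proof -
  assume "a < b"
  then obtain M m d where Md: "1 \<le> M" "d = of_int m * (1/2::real)^M" "a < d" "d < b"
    using dyadic_in by blast
  obtain r0 where r0: "r0 > 0" "\<And>r. 0 < r \<Longrightarrow> r \<le> r0 \<Longrightarrow> measure lebesgue (Eset \<inter> {d - r<..<d + r}) \<le> r/2"
    using holes[OF Md(1) Md(2)] by blast
  define r where "r = min r0 (1 / (2 * real (Suc k)))"
  have q: "0 < 1 / (2 * real (Suc k))" "1 / (2 * real (Suc k)) < 1 / real (Suc k)"
    by (simp_all add: divide_strict_left_mono)
  have ra: "r \<le> r0" "r \<le> 1 / (2 * real (Suc k))" by (simp_all add: r_def)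
  have rb: "0 < r" using r0(1) q(1) by (simp add: r_def)
  have r: "0 < r" "r \<le> r0" "r < 1 / Suc k"
    using ra rb order.strict_trans1[OF ra(2) q(2)] by auto
  have W: "measure lebesgue (Eset \<inter> {d - r<..<d + r}) \<le> r/2" using r0(2) r by auto
  have Wfm: "Eset \<inter> {d - r<..<d + r} \<in> lmeasurable"
    by (rule fmeasurableI2[OF lmeasurable_interval(2)]) (auto intro: Eset_sets)
  have "measure lebesgue ({d - r<..<d} \<inter> Eset) \<le> measure lebesgue (Eset \<inter> {d - r<..<d + r})"
    by (rule measure_mono_fmeasurable[OF _ _ Wfm]) (auto intro: Eset_sets)
  then have s1: "measure lebesgue ({d - r<..<d} \<inter> Eset) / r \<le> 1/2"
    using W r(1) by (simp add: divide_le_eq)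
  have "measure lebesgue ({d<..<d + r} \<inter> Eset) \<le> measure lebesgue (Eset \<inter> {d - r<..<d + r})"
    by (rule measure_mono_fmeasurable[OF _ _ Wfm]) (auto intro: Eset_sets)
  then have s2: "measure lebesgue ({d<..<d + r} \<inter> Eset) / r \<le> 1/2"
    using W r(1) by (simp add: divide_le_eq)
  have "Fm d r \<le> 1/2" unfolding Fm_def using s1 s2 by simp
  then have "d \<in> Sk k" using r unfolding Sk_def by (intro CollectI exI[of _ r]) auto
  then show ?thesis using Md by blast
qed

lemma dense_closure:
  assumes "\<And>a b. a < b \<Longrightarrow> \<exists>x\<in>S. a < x \<and> x < (b::real)"
  shows "closure S = UNIV"
proof -
  have "x \<in> closure S" for x
    unfolding closure_approachable
  proof (intro allI impI)
    fix e :: real assume "e > 0"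
    then obtain y where "y \<in> S" "x - e < y" "y < x + e" using assms[of "x - e" "x + e"] by auto
    then show "\<exists>y\<in>S. dist y x < e" by (intro bexI[of _ y]) (auto simp: dist_real_def abs_less_iff)
  qed
  then show ?thesis by auto
qed

theorem theorem1p4:
  shows "\<exists>E :: real set. fsigma_in euclideanreal E \<and> SUDT E \<and>
     (\<forall>E'. gdelta_in euclideanreal E' \<and> emeasure lebesgue ((E - E') \<union> (E' - E)) = 0
        \<longrightarrow> \<not> UDT E')"
proof (intro exI[of _ Eset] conjI allI impI)
  show "fsigma_in euclideanreal Eset" by (rule Eset_fsigma)
  show "SUDT Eset" by (rule SUDT_Eset)
  fix E' assume h: "gdelta_in euclideanreal E' \<and> emeasure lebesgue ((Eset - E') \<union> (E' - Eset)) = 0"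
  show "\<not> UDT E'"
  proof
    assume U: "UDT E'"
    then obtain g dl where E'm: "E' \<in> sets lebesgue" and adm: "admissible_seqs g dl"
      and sub: "E' \<subseteq> (\<Inter>k. \<Union>n\<in>{k..}. dens_set E' (g n) (dl n))" by (auto simp: UDT_def)
    have N: "emeasure lebesgue ((Eset - E') \<union> (E' - Eset)) = 0" using h by simp
    have deq: "dens_set E' (g n) (dl n) = dens_set Eset (g n) (dl n)" for n
      by (rule dens_set_eq[OF Eset_sets E'm N])
    have E'dense: "\<exists>x\<in>E'. a < x \<and> x < b" if ab: "a < b" for a b
    proof (rule ccontr)
      assume no: "\<not> (\<exists>x\<in>E'. a < x \<and> x < b)"
      then have "Eset \<inter> {a<..<b} \<subseteq> (Eset - E') \<union> (E' - Eset)" by auto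
      then have "emeasure lebesgue (Eset \<inter> {a<..<b}) \<le> emeasure lebesgue ((Eset - E') \<union> (E' - Eset))"
        by (rule emeasure_mono) (use Eset_sets E'm in auto)
      then have "emeasure lebesgue (Eset \<inter> {a<..<b}) = 0" using N by simp
      then have "measure lebesgue (Eset \<inter> {a<..<b}) = 0" by (simp add: measure_def)
      then show False using Epos[OF ab] by simp
    qed
    have cE': "closure E' = UNIV" by (rule dense_closure) (use E'dense in blast)
    obtain T where T: "countable T" "T \<subseteq> Collect (openin euclideanreal)" "\<Inter>T = E'"
      using h unfolding gdelta_in_alt intersection_of_def by auto
    define G where "G = range Sk \<union> T"
    have "UNIV \<subseteq> closure (\<Inter>G)"
    proof (rule Baire[OF closed_UNIV])
      show "countable G" using T(1) by (simp add: G_def)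
      fix t assume "t \<in> G"
      then consider (S) k where "t = Sk k" | (TT) "t \<in> T" by (auto simp: G_def)
      then show "openin (top_of_set UNIV) t \<and> UNIV \<subseteq> closure t"
      proof cases
        case S
        have "closure (Sk k) = UNIV" by (rule dense_closure) (use Sk_dense in blast)
        then show ?thesis using Sk_open[of k] S by simp
      next
        case TT
        have "openin euclidean t" using TT T(2) by auto
        then have "open t" using open_openin by blast
        moreover have "E' \<subseteq> t" using TT T(3) by auto
        then have "closure E' \<subseteq> closure t" by (rule closure_mono)
        ultimately show ?thesis using cE' by simp
      qed
    qed
    then have "\<Inter>G \<noteq> {}" by auto
    then obtain x where x: "x \<in> \<Inter>G" by auto
    have xE': "x \<in> E'" using x T(3) unfolding G_def by auto
    have xS: "x \<in> Sk k" for k using x unfolding G_def by auto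
    have g1: "g \<longlonglongrightarrow> 1" using adm by (simp add: admissible_seqs_def)
    have "\<forall>\<^sub>F n in sequentially. 3/4 < g n" by (rule order_tendstoD(1)[OF g1]) simp
    then obtain k0 where k0: "\<And>n. n \<ge> k0 \<Longrightarrow> 3/4 < g n" by (auto simp: eventually_sequentially)
    from sub xE' obtain n where n: "n \<ge> k0" "x \<in> dens_set E' (g n) (dl n)" by auto
    have dlp: "dl n > 0" using adm by (simp add: admissible_seqs_def)
    obtain j :: nat where j: "j > 0" "inverse (real j) < dl n" using ex_inverse_of_nat_less[OF dlp] by auto
    define k where "k = j - 1"
    have kj: "real (Suc k) = real j" using j(1) by (simp add: k_def)
    obtain r where r: "0 < r" "r < 1/(Suc k)" "Fm x r < 3/4" using xS[of k] by (auto simp: Sk_def)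
    have "r < dl n" using r(2) j(2) kj by (simp add: inverse_eq_divide)
    then have "r \<in> {0<..dl n}" using r(1) by simp
    moreover have "x \<in> dens_set Eset (g n) (dl n)" using n(2) deq by simp
    ultimately have "g n \<le> Fm x r" unfolding dens_set_def Fm_def by blast
    then show False using k0[OF n(1)] r(3) by linarith
  qed
qed

end
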